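(* Let $c_0\ge0$, $c_1>0$, $a<0$, $v_\circ\ge0$ with $c_0^2+4ac_1<0$, let $v$ solve $v'=a-c_0v-c_1v^2$, $v(0)=v_\circ$, and $s(t)=\int_0^tv$. Let $\ell_1=\sqrt{c_1(A_0+|a|)}$ and let $\theta_1\in(0,\pi/2]$ be defined by $\cos\theta_1=\frac{2c_1v_\circ+c_0}{2\ell_1}$, $\sin\theta_1=\frac{|w|}{2\ell_1}$. Then for all $t\neq 0$ in the interval of existence, $$s(t)=(A_0+|a|)\,t^2\,Q(t\ell_1,\cos\theta_1)+v_\circ t,$$ where $Q(\tau,c)=\frac1{\tau^2}\log\Big(\frac{c}{\sigma}\sin(\tau\sigma)+\cos(\tau\sigma)\Big)-\frac c\tau$ with $\sigma=\sqrt{1-c^2}$. Moreover, for $c\in[0,1]$ and $0<|\tau|\le 0.001$, $$Q(\tau,c)=-\frac12+\frac{c\tau}3-\frac{2c^2+1}{12}\tau^2+\frac{c^2+2}{15}c\tau^3-\frac{2c^4+11c^2+2}{90}\tau^4+\frac{2c^4+26c^2+17}{315}c\tau^5-\varepsilon(\tau,c)$$ with $|\varepsilon(\tau,c)|\le10^{-18}$.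
   Context: $|w|=\sqrt{-(c_0^2+4ac_1)}$, $A_0=(c_1v_\circ+c_0)v_\circ$. For $c=1$ (i.e. $\sigma=0$) the expression $\frac{c}{\sigma}\sin(\tau\sigma)$ is understood as its limit $\tau$. *)

theory Defs
  imports "HOL-Analysis.Analysis"
begin

definition signed_integral0 :: "(real \<Rightarrow> real) \<Rightarrow> real \<Rightarrow> real" where
  "signed_integral0 f t =
     (if 0 \<le> t then integral {0..t} f else - integral {t..0} f)"

text \<open>(c / sigma) sin(tau sigma), with sigma = sqrt(1 - c^2); for c = 1 (sigma = 0)
  understood as its limit tau.\<close>
definition sinc_term :: "real \<Rightarrow> real \<Rightarrow> real" where
  "sinc_term \<tau> c =
     (if c = 1 then \<tau> else c / sqrt (1 - c\<^sup>2) * sin (\<tau> * sqrt (1 - c\<^sup>2)))"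

definition Qfun :: "real \<Rightarrow> real \<Rightarrow> real" where
  "Qfun \<tau> c = ln (sinc_term \<tau> c + cos (\<tau> * sqrt (1 - c\<^sup>2))) / \<tau>\<^sup>2 - c / \<tau>"

end

theory Submission
  imports Defs
begin

definition Ed :: "nat \<Rightarrow> real \<Rightarrow> real \<Rightarrow> real" where
  "Ed k m x = [x, m - x^2, 2*x^3 - 2*x*m, -2*m^2 + 8*x^2*m - 6*x^4,
     16*x*m^2 - 40*x^3*m + 24*x^5, 16*m^3 - 136*x^2*m^2 + 240*x^4*m - 120*x^6,
     -272*x*m^3 + 1232*x^3*m^2 - 1680*x^5*m + 720*x^7,
     -272*m^4 + 3968*x^2*m^3 - 12096*x^4*m^2 + 13440*x^6*m - 5040*x^8] ! k"

definition Dd :: "nat \<Rightarrow> real \<Rightarrow> real \<Rightarrow> real" where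
  "Dd k m x = [1, -2*x, 6*x^2-2*m, 16*x*m-24*x^3, 16*m^2-120*x^2*m+120*x^4,
     -272*x*m^2 + 960*x^3*m - 720*x^5, -272*m^3 + 3696*x^2*m^2 - 8400*x^4*m + 5040*x^6] ! k"

lemma Ed_deriv0: "((\<lambda>x. Ed 0 m x) has_real_derivative Dd 0 m x) (at x) \<and> Dd 0 m x * (m - x^2) = Ed (Suc 0) m x"
proof
  show "((\<lambda>x. Ed 0 m x) has_real_derivative Dd 0 m x) (at x)"
    unfolding Ed_def Dd_def by (simp; ((rule derivative_eq_intros refl | simp)+)?)
  show "Dd 0 m x * (m - x^2) = Ed (Suc 0) m x"
    unfolding Ed_def Dd_def by (simp; algebra?)
qed

lemma Ed_deriv1: "((\<lambda>x. Ed 1 m x) has_real_derivative Dd 1 m x) (at x) \<and> Dd 1 m x * (m - x^2) = Ed (Suc 1) m x"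
proof
  show "((\<lambda>x. Ed 1 m x) has_real_derivative Dd 1 m x) (at x)"
    unfolding Ed_def Dd_def by (simp; ((rule derivative_eq_intros refl | simp)+)?)
  show "Dd 1 m x * (m - x^2) = Ed (Suc 1) m x"
    unfolding Ed_def Dd_def by (simp; algebra?)
qed

lemma Ed_deriv2: "((\<lambda>x. Ed 2 m x) has_real_derivative Dd 2 m x) (at x) \<and> Dd 2 m x * (m - x^2) = Ed (Suc 2) m x"
proof
  show "((\<lambda>x. Ed 2 m x) has_real_derivative Dd 2 m x) (at x)"
    unfolding Ed_def Dd_def by (simp; ((rule derivative_eq_intros refl | simp)+)?)
  show "Dd 2 m x * (m - x^2) = Ed (Suc 2) m x"
    unfolding Ed_def Dd_def by (simp; algebra?)
qed

lemma Ed_deriv3: "((\<lambda>x. Ed 3 m x) has_real_derivative Dd 3 m x) (at x) \<and> Dd 3 m x * (m - x^2) = Ed (Suc 3) m x"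
proof
  show "((\<lambda>x. Ed 3 m x) has_real_derivative Dd 3 m x) (at x)"
    unfolding Ed_def Dd_def by (simp; ((rule derivative_eq_intros refl | simp)+)?)
  show "Dd 3 m x * (m - x^2) = Ed (Suc 3) m x"
    unfolding Ed_def Dd_def by (simp; algebra?)
qed

lemma Ed_deriv4: "((\<lambda>x. Ed 4 m x) has_real_derivative Dd 4 m x) (at x) \<and> Dd 4 m x * (m - x^2) = Ed (Suc 4) m x"
proof
  show "((\<lambda>x. Ed 4 m x) has_real_derivative Dd 4 m x) (at x)"
    unfolding Ed_def Dd_def by (simp; ((rule derivative_eq_intros refl | simp)+)?)
  show "Dd 4 m x * (m - x^2) = Ed (Suc 4) m x"
    unfolding Ed_def Dd_def by (simp; algebra?)
qed

lemma Ed_deriv5: "((\<lambda>x. Ed 5 m x) has_real_derivative Dd 5 m x) (at x) \<and> Dd 5 m x * (m - x^2) = Ed (Suc 5) m x"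
proof
  show "((\<lambda>x. Ed 5 m x) has_real_derivative Dd 5 m x) (at x)"
    unfolding Ed_def Dd_def by (simp; ((rule derivative_eq_intros refl | simp)+)?)
  show "Dd 5 m x * (m - x^2) = Ed (Suc 5) m x"
    unfolding Ed_def Dd_def by (simp; algebra?)
qed

lemma Ed_deriv6: "((\<lambda>x. Ed 6 m x) has_real_derivative Dd 6 m x) (at x) \<and> Dd 6 m x * (m - x^2) = Ed (Suc 6) m x"
proof
  show "((\<lambda>x. Ed 6 m x) has_real_derivative Dd 6 m x) (at x)"
    unfolding Ed_def Dd_def by (simp; ((rule derivative_eq_intros refl | simp)+)?)
  show "Dd 6 m x * (m - x^2) = Ed (Suc 6) m x"
    unfolding Ed_def Dd_def by (simp; algebra?)
qed

lemma Ed_deriv: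
  assumes "k < 7"
  shows "((\<lambda>x. Ed k m x) has_real_derivative Dd k m x) (at x) \<and> Dd k m x * (m - x^2) = Ed (Suc k) m x"
proof -
  have "k = 0 \<or> k = 1 \<or> k = 2 \<or> k = 3 \<or> k = 4 \<or> k = 5 \<or> k = 6" using assms by auto
  then show ?thesis using Ed_deriv0 Ed_deriv1 Ed_deriv2 Ed_deriv3 Ed_deriv4 Ed_deriv5 Ed_deriv6 by blast
qed

lemma Ed7_bound:
  assumes "\<bar>x\<bar> \<le> 1.004" "-1 \<le> m" "m \<le> 0"
  shows "\<bar>Ed 7 m x\<bar> \<le> 35600"
proof -
  define n where "n = -m"
  define y where "y = x^2"
  have n: "0 \<le> n" "n \<le> 1" using assms by (auto simp: n_def)
  have y: "0 \<le> y" "y \<le> 1.004^2" unfolding y_def using assms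
    by (auto simp: power2_le_iff_abs_le)
  have e: "Ed 7 m x = -(272*n^4 + 3968*y*n^3 + 12096*y^2*n^2 + 13440*y^3*n + 5040*y^4)"
    unfolding Ed_def n_def y_def by (simp; algebra?)
  have "272*n^4 + 3968*y*n^3 + 12096*y^2*n^2 + 13440*y^3*n + 5040*y^4
      \<le> 272*1^4 + 3968*1.004^2*1^3 + 12096*(1.004^2)^2*1^2 + 13440*(1.004^2)^3*1 + 5040*(1.004^2)^4"
    apply (intro add_mono mult_mono power_mono mult_nonneg_nonneg)
    using n y by auto
  also have "\<dots> \<le> 35600" by (simp add: eval_nat_numeral)
  finally have "272*n^4 + 3968*y*n^3 + 12096*y^2*n^2 + 13440*y^3*n + 5040*y^4 \<le> 35600" .
  moreover have "0 \<le> 272*n^4 + 3968*y*n^3 + 12096*y^2*n^2 + 13440*y^3*n + 5040*y^4" using n y by simp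
  ultimately show ?thesis unfolding e by simp
qed

lemma cos_lower: "cos (x::real) \<ge> 1 - x^2/2"
proof -
  have "cos x = cos (2*(x/2))" by simp
  also have "\<dots> = 1 - 2 * sin (x/2) ^ 2" by (rule cos_double_sin)
  finally have e: "cos x = 1 - 2 * sin (x/2) ^ 2" .
  have "\<bar>sin (x/2)\<bar>^2 \<le> \<bar>x/2\<bar>^2"
    using abs_sin_x_le_abs_x[of "x/2"] by (rule power_mono) simp
  then have "sin (x/2) ^ 2 \<le> (x/2)^2" by (simp add: power_divide)
  then show ?thesis unfolding e by (simp add: power_divide)
qed

lemma part2:
  fixes \<tau> c :: real
  assumes c0: "0 \<le> c" and c1: "c \<le> 1" and t0: "0 < \<bar>\<tau>\<bar>" and t1: "\<bar>\<tau>\<bar> \<le> 0.001"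
  shows "\<exists>\<epsilon>. Qfun \<tau> c =
                 - 1/2 + c * \<tau> / 3 - (2 * c\<^sup>2 + 1) / 12 * \<tau>\<^sup>2
                 + (c\<^sup>2 + 2) / 15 * c * \<tau> ^ 3
                 - (2 * c ^ 4 + 11 * c\<^sup>2 + 2) / 90 * \<tau> ^ 4
                 + (2 * c ^ 4 + 26 * c\<^sup>2 + 17) / 315 * c * \<tau> ^ 5 - \<epsilon>
               \<and> \<bar>\<epsilon>\<bar> \<le> 10 powi (-18)"
proof -
  define \<sigma> where "\<sigma> = sqrt (1 - c^2)"
  have c2: "c^2 \<le> 1" using c0 c1 by (simp add: power_le_one)
  have s0: "0 \<le> \<sigma>" and s2: "\<sigma>^2 = 1 - c^2" using c2 by (auto simp: \<sigma>_def)
  have s1: "\<sigma> \<le> 1" unfolding \<sigma>_def using c0 by simp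
  define S where "S t = (if c = 1 then t else sin (t*\<sigma>)/\<sigma>)" for t
  define g where "g t = c * S t + cos (t*\<sigma>)" for t
  define gp where "gp t = c * cos (t*\<sigma>) - \<sigma>^2 * S t" for t
  define h where "h t = gp t / g t" for t
  define m where "m = c^2 - 1"
  have m: "m = -(\<sigma>^2)" using s2 by (simp add: m_def)
  have spos: "c \<noteq> 1 \<Longrightarrow> \<sigma> > 0"
  proof -
    assume "c \<noteq> 1"
    then have "c < 1" using c1 by simp
    then have "c^2 < 1" using c0 by (simp add: power_less_one_iff abs_square_less_1)
    then show "\<sigma> > 0" by (simp add: \<sigma>_def)
  qed
  have dS: "(S has_real_derivative cos (t*\<sigma>)) (at t)" for t
  proof (cases "c = 1")
    case True
    then have "\<sigma> = 0" by (simp add: \<sigma>_def)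
    then show ?thesis using True unfolding S_def by (auto intro!: derivative_eq_intros)
  next
    case False
    have "S = (\<lambda>t. sin (t*\<sigma>)/\<sigma>)" using False unfolding S_def by auto
    then show ?thesis using spos[OF False] by (auto intro!: derivative_eq_intros)
  qed
  have Ss: "\<sigma> * sin (t*\<sigma>) = \<sigma>^2 * S t" for t
  proof (cases "c = 1")
    case True
    then have "\<sigma> = 0" by (simp add: \<sigma>_def)
    then show ?thesis by simp
  next
    case False
    then show ?thesis using spos[OF False] unfolding S_def by (simp add: power2_eq_square)
  qed
  have dc: "((\<lambda>t. cos (t*\<sigma>)) has_real_derivative -(\<sigma>^2 * S t)) (at t)" for t
  proof -
    have "\<sigma> * sin (\<sigma>*t) = S t * \<sigma>^2" using Ss[of t] by (simp add: mult.commute)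
    then show ?thesis by (auto intro!: derivative_eq_intros simp: algebra_simps)
  qed
  have dg: "(g has_real_derivative gp t) (at t)" for t
    unfolding g_def[abs_def] gp_def
    by (rule derivative_eq_intros dS dc refl | simp)+
  have dgp: "(gp has_real_derivative -(\<sigma>^2) * g t) (at t)" for t
    unfolding gp_def[abs_def] g_def
    apply (rule derivative_eq_intros dS dc refl)+
    using Ss[of t] by (auto simp: algebra_simps power2_eq_square)
  have Sb: "\<bar>S t\<bar> \<le> \<bar>t\<bar>" for t
  proof (cases "c = 1")
    case True then show ?thesis by (simp add: S_def)
  next
    case False
    have "\<bar>sin (t*\<sigma>)\<bar> \<le> \<bar>t\<bar>*\<sigma>" using abs_sin_x_le_abs_x[of "t*\<sigma>"] s0 by (simp add: abs_mult)
    then show ?thesis using False spos[OF False] by (simp add: S_def divide_le_eq)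
  qed
  have cb: "\<bar>t\<bar> \<le> 0.001 \<Longrightarrow> cos (t*\<sigma>) \<ge> 0.999" for t
  proof -
    assume a: "\<bar>t\<bar> \<le> 0.001"
    have "\<bar>t*\<sigma>\<bar> \<le> \<bar>t\<bar> * 1" unfolding abs_mult using s0 s1 by (intro mult_left_mono) auto
    then have "\<bar>t*\<sigma>\<bar> \<le> 0.001" using a by linarith
    then have "(t*\<sigma>)^2 \<le> 0.001^2" by (simp add: abs_le_square_iff[symmetric])
    then have "(t*\<sigma>)^2 \<le> 1/1000000" by (simp add: power_divide)
    then show ?thesis using cos_lower[of "t*\<sigma>"] by (simp; linarith)
  qed
  have gb: "\<bar>t\<bar> \<le> 0.001 \<Longrightarrow> g t \<ge> 0.998" for t
  proof -
    assume a: "\<bar>t\<bar> \<le> 0.001"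
    have "\<bar>c * S t\<bar> \<le> 1 * \<bar>t\<bar>" unfolding abs_mult using Sb[of t] c0 c1 by (intro mult_mono) auto
    then have "\<bar>c * S t\<bar> \<le> 0.001" using a by linarith
    then show ?thesis using cb[OF a] unfolding g_def by simp
  qed
  have gpb: "\<bar>t\<bar> \<le> 0.001 \<Longrightarrow> \<bar>gp t\<bar> \<le> 1.001" for t
  proof -
    assume a: "\<bar>t\<bar> \<le> 0.001"
    have "\<sigma>^2 \<le> 1" using s0 s1 by (simp add: power_le_one)
    then have "\<bar>\<sigma>^2 * S t\<bar> \<le> 1 * \<bar>t\<bar>" unfolding abs_mult using Sb[of t] by (intro mult_mono) auto
    then have "\<bar>\<sigma>^2 * S t\<bar> \<le> 0.001" using a by linarith
    moreover have "\<bar>c * cos (t*\<sigma>)\<bar> \<le> 1" using c0 c1 by (simp add: abs_mult mult_le_one)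
    moreover have "\<bar>c * cos (t*\<sigma>) - \<sigma>^2 * S t\<bar> \<le> \<bar>c * cos (t*\<sigma>)\<bar> + \<bar>\<sigma>^2 * S t\<bar>"
      by (rule abs_triangle_ineq4)
    ultimately show ?thesis unfolding gp_def by (simp; linarith)
  qed
  have hb: "\<bar>t\<bar> \<le> 0.001 \<Longrightarrow> \<bar>h t\<bar> \<le> 1.004" for t
  proof -
    assume a: "\<bar>t\<bar> \<le> 0.001"
    have g: "g t \<ge> 0.998" using gb[OF a] .
    have "\<bar>h t\<bar> = \<bar>gp t\<bar> / g t" using g by (simp add: h_def abs_divide)
    also have "\<dots> \<le> 1.001 / 0.998" using g gpb[OF a] by (intro frac_le) auto
    also have "\<dots> \<le> 1.004" by simp
    finally show ?thesis .
  qed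
  have dh: "\<bar>t\<bar> \<le> 0.001 \<Longrightarrow> (h has_real_derivative m - (h t)^2) (at t)" for t
  proof -
    assume a: "\<bar>t\<bar> \<le> 0.001"
    have g: "g t \<noteq> 0" using gb[OF a] by simp
    show ?thesis unfolding h_def[abs_def]
      apply (rule derivative_eq_intros dg dgp refl | simp add: g)+
      using g by (simp add: m field_simps power2_eq_square)
  qed
  have g0: "g 0 = 1" and gp0: "gp 0 = c" and h0: "h 0 = c" by (auto simp: g_def gp_def h_def S_def)
  define diff where "diff k t = (if k = 0 then ln (g t) else Ed (k - 1) m (h t))" for k t
  have D: "\<forall>k t. k < 8 \<and> \<bar>t\<bar> \<le> \<bar>\<tau>\<bar> \<longrightarrow> (diff k has_real_derivative diff (Suc k) t) (at t)"
  proof (intro allI impI, elim conjE)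
    fix k t assume k: "k < (8::nat)" and t: "\<bar>t\<bar> \<le> \<bar>\<tau>\<bar>"
    then have a: "\<bar>t\<bar> \<le> 0.001" using t1 by simp
    show "(diff k has_real_derivative diff (Suc k) t) (at t)"
    proof (cases "k = 0")
      case True
      have "((\<lambda>t. ln (g t)) has_real_derivative gp t / g t) (at t)"
        using gb[OF a] by (auto intro!: derivative_eq_intros dg)
      then show ?thesis using True by (simp add: diff_def[abs_def] h_def Ed_def)
    next
      case False
      then obtain j where j: "k = Suc j" "j < 7" using k by (cases k) auto
      have "((\<lambda>t. Ed j m (h t)) has_real_derivative Dd j m (h t) * (m - (h t)^2)) (at t)"
        using DERIV_chain2[OF conjunct1[OF Ed_deriv[OF j(2)]] dh[OF a]] by simp
      then have "((\<lambda>t. Ed j m (h t)) has_real_derivative Ed (Suc j) m (h t)) (at t)"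
        using conjunct2[OF Ed_deriv[OF j(2), of m "h t"]] by simp
      then show ?thesis using j by (simp add: diff_def[abs_def])
    qed
  qed
  obtain t where t: "\<bar>t\<bar> \<le> \<bar>\<tau>\<bar>" and
    T: "ln (g \<tau>) = (\<Sum>k<8. diff k 0 / fact k * \<tau> ^ k) + diff 8 t / fact 8 * \<tau> ^ 8"
    using Maclaurin_bi_le[of diff "\<lambda>t. ln (g t)" 8 \<tau>, OF _ D] by (auto simp: diff_def[abs_def])
  have ta: "\<bar>t\<bar> \<le> 0.001" using t t1 by simp
  have sinc: "sinc_term \<tau> c + cos (\<tau> * sqrt (1 - c\<^sup>2)) = g \<tau>"
    by (simp add: sinc_term_def g_def S_def \<sigma>_def)
  define E where "E = - (Ed 7 m (h t) / fact 8 * \<tau> ^ 6)"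
  have Q: "Qfun \<tau> c = ln (g \<tau>) / \<tau>^2 - c / \<tau>"
    unfolding Qfun_def sinc ..
  have sum: "(\<Sum>k<8. diff k 0 / fact k * \<tau> ^ k) = (\<Sum>k<8. diff k 0 / fact k * \<tau> ^ k)" ..
  show ?thesis
  proof (intro exI conjI)
    have tn: "\<tau> \<noteq> 0" using t0 by auto
    have "ln (g \<tau>) = c * \<tau> + Ed 1 m c / 2 * \<tau>^2 + Ed 2 m c / 6 * \<tau>^3 + Ed 3 m c / 24 * \<tau>^4
       + Ed 4 m c / 120 * \<tau>^5 + Ed 5 m c / 720 * \<tau>^6 + Ed 6 m c / 5040 * \<tau>^7
       + Ed 7 m (h t) / 40320 * \<tau>^8"
      unfolding T by (simp add: diff_def g0 h0 lessThan_Suc_eq_insert_0 Ed_def fact_numeral eval_nat_numeral)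
    then show "Qfun \<tau> c =
                 - 1/2 + c * \<tau> / 3 - (2 * c\<^sup>2 + 1) / 12 * \<tau>\<^sup>2
                 + (c\<^sup>2 + 2) / 15 * c * \<tau> ^ 3
                 - (2 * c ^ 4 + 11 * c\<^sup>2 + 2) / 90 * \<tau> ^ 4
                 + (2 * c ^ 4 + 26 * c\<^sup>2 + 17) / 315 * c * \<tau> ^ 5 - E"
      unfolding Q E_def using tn
      by (simp add: Ed_def m_def fact_numeral field_simps) algebra
    have "\<bar>\<tau>\<bar>^6 \<le> 0.001^6" using t1 by (intro power_mono) auto
    moreover have "\<bar>Ed 7 m (h t)\<bar> \<le> 35600" using hb[OF ta] Ed7_bound[of "h t" m] c2 c0
      by (simp add: m_def)
    ultimately have "\<bar>Ed 7 m (h t)\<bar> / 40320 * \<bar>\<tau>\<bar>^6 \<le> 35600 / 40320 * 0.001^6"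
      by (intro mult_mono divide_right_mono) auto
    moreover have "\<bar>E\<bar> = \<bar>Ed 7 m (h t)\<bar> / 40320 * \<bar>\<tau>\<bar>^6"
      unfolding E_def by (simp add: abs_mult power_abs fact_numeral abs_divide)
    ultimately have "\<bar>E\<bar> \<le> 35600 / 40320 * 0.001^6" by linarith
    also have "\<dots> \<le> 10 powi (-18)" by (simp add: power_int_minus power_divide)
    finally show "\<bar>E\<bar> \<le> 10 powi (-18)" .
  qed
qed




lemma riccati_sol:
  fixes c0 c1 a \<omega> l r t :: real and v S :: "real \<Rightarrow> real"
  assumes w: "\<omega> > 0" and ww: "c1 * a + c0^2/4 = -(\<omega>^2)"
    and J0: "0 \<in> {l..r}" and Jt: "t \<in> {l..r}"
    and dv: "\<And>x. x \<in> {l..r} \<Longrightarrow> (v has_real_derivative (a - c0 * v x - c1 * (v x)\<^sup>2)) (at x within {l..r})"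
    and dS: "\<And>x. x \<in> {l..r} \<Longrightarrow> (S has_real_derivative v x) (at x within {l..r})"
    and S0: "S 0 = 0"
  shows "exp (c1 * S t + c0 * t / 2) = cos (\<omega> * t) + (c1 * v 0 + c0/2) / \<omega> * sin (\<omega> * t)"
proof -
  define J where "J = {l..r}"
  define p where "p x = exp (c1 * S x + c0 * x / 2)" for x
  define q where "q x = (c1 * v x + c0/2) * p x / \<omega>" for x
  define A where "A x = p x * cos (\<omega> * x) - q x * sin (\<omega> * x)" for x
  define B where "B x = p x * sin (\<omega> * x) + q x * cos (\<omega> * x)" for x
  have dp: "(p has_real_derivative \<omega> * q x) (at x within J)" if x: "x \<in> J" for x
  proof -
    have "(p has_real_derivative p x * (c1 * v x + c0 / 2)) (at x within J)"
      unfolding p_def[abs_def] using dS[OF x[unfolded J_def]]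
      by (auto intro!: derivative_eq_intros simp: J_def)
    moreover have "\<omega> * q x = p x * (c1 * v x + c0 / 2)" using w by (simp add: q_def)
    ultimately show ?thesis by simp
  qed
  have dq: "(q has_real_derivative -\<omega> * p x) (at x within J)" if x: "x \<in> J" for x
  proof -
    have "(q has_real_derivative (c1 * (a - c0 * v x - c1 * (v x)\<^sup>2) * p x + (c1 * v x + c0/2) * (\<omega> * q x)) / \<omega>) (at x within J)"
      unfolding q_def[abs_def]
      apply (rule derivative_eq_intros dp[OF x] refl | use dv[OF x[unfolded J_def]] in \<open>simp add: J_def\<close>)+
      using w by (simp_all add: q_def field_simps)
    moreover have "(c1 * (a - c0 * v x - c1 * (v x)\<^sup>2) * p x + (c1 * v x + c0/2) * (\<omega> * q x)) / \<omega> = -\<omega> * p x"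
    proof -
      have "(c1 * (a - c0 * v x - c1 * (v x)\<^sup>2) * p x + (c1 * v x + c0/2) * (\<omega> * q x))
          = p x * (c1 * a + c0^2/4)"
        using w by (simp add: q_def field_simps power2_eq_square)
      then show ?thesis using w ww by (simp add: power2_eq_square)
    qed
    ultimately show ?thesis by simp
  qed
  have dA: "(A has_real_derivative 0) (at x within J)" if x: "x \<in> J" for x
    unfolding A_def[abs_def]
    by (rule derivative_eq_intros dp[OF x] dq[OF x] refl | simp add: algebra_simps)+
  have dB: "(B has_real_derivative 0) (at x within J)" if x: "x \<in> J" for x
    unfolding B_def[abs_def]
    by (rule derivative_eq_intros dp[OF x] dq[OF x] refl | simp add: algebra_simps)+
  obtain kA where kA: "\<forall>x\<in>J. A x = kA"
    using has_field_derivative_zero_constant[of J A] dA by (auto simp: J_def)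
  obtain kB where kB: "\<forall>x\<in>J. B x = kB"
    using has_field_derivative_zero_constant[of J B] dB by (auto simp: J_def)
  have p0: "p 0 = 1" by (simp add: p_def S0)
  have "A t = A 0" using kA J0 Jt by (simp add: J_def)
  then have At: "A t = 1" by (simp add: A_def p0)
  have "B t = B 0" using kB J0 Jt by (simp add: J_def)
  then have Bt: "B t = (c1 * v 0 + c0/2) / \<omega>" by (simp add: B_def p0 q_def)
  have "p t = A t * cos (\<omega> * t) + B t * sin (\<omega> * t)"
    unfolding A_def B_def by (simp add: algebra_simps) (metis distrib_left mult.right_neutral sin_cos_squared_add3 power2_eq_square)
  then show ?thesis unfolding At Bt by (simp add: p_def)
qed


lemma part1:
  fixes c0 c1 a v0 \<theta>1 :: real and v :: "real \<Rightarrow> real" and I :: "real set"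
  assumes hc0: "c0 \<ge> 0" and hc1: "c1 > 0" and ha: "a < 0" and hv0: "v0 \<ge> 0"
    and hdisc: "c0\<^sup>2 + 4 * a * c1 < 0"
    and hI: "is_interval I" and h0I: "0 \<in> I"
    and hode: "\<And>t. t \<in> I \<Longrightarrow>
                 (v has_real_derivative (a - c0 * v t - c1 * (v t)\<^sup>2)) (at t within I)"
    and hinit: "v 0 = v0"
    and h\<theta>: "0 < \<theta>1" "\<theta>1 \<le> pi / 2"
    and hcos: "cos \<theta>1 = (2 * c1 * v0 + c0) /
                 (2 * sqrt (c1 * ((c1 * v0 + c0) * v0 + \<bar>a\<bar>)))"
    and hsin: "sin \<theta>1 = sqrt (- (c0\<^sup>2 + 4 * a * c1)) /
                 (2 * sqrt (c1 * ((c1 * v0 + c0) * v0 + \<bar>a\<bar>)))"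
    and tI: "t \<in> I" and t0: "t \<noteq> 0"
  shows "signed_integral0 v t =
              ((c1 * v0 + c0) * v0 + \<bar>a\<bar>) * t\<^sup>2 *
                Qfun (t * sqrt (c1 * ((c1 * v0 + c0) * v0 + \<bar>a\<bar>))) (cos \<theta>1)
              + v0 * t"
proof -
  define l where "l = min 0 t"
  define r where "r = max 0 t"
  have JI: "{l..r} \<subseteq> I"
  proof
    fix x assume x: "x \<in> {l..r}"
    have iv: "\<forall>a\<in>I. \<forall>b\<in>I. \<forall>x. a \<le> x \<and> x \<le> b \<longrightarrow> x \<in> I" using hI by (simp only: is_interval_1)
    show "x \<in> I"
    proof (cases "0 \<le> t")
      case True
      then have "0 \<le> x \<and> x \<le> t" using x by (simp add: l_def r_def)
      then show ?thesis using iv[rule_format, OF h0I tI] by simp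
    next
      case False
      then have "t \<le> x \<and> x \<le> 0" using x by (simp add: l_def r_def)
      then show ?thesis using iv[rule_format, OF tI h0I] by simp
    qed
  qed
  have J0: "0 \<in> {l..r}" and Jt: "t \<in> {l..r}" by (auto simp: l_def r_def)
  have cont: "continuous_on {l..r} v"
    using DERIV_continuous_on[of I v, OF hode] JI continuous_on_subset by blast
  define S where "S x = integral {l..x} v - integral {l..0} v" for x
  have dS: "(S has_real_derivative v x) (at x within {l..r})" if x: "x \<in> {l..r}" for x
    unfolding S_def[abs_def]
    using integral_has_real_derivative[OF cont x]
    by (auto intro!: derivative_eq_intros)
  have dv: "(v has_real_derivative (a - c0 * v x - c1 * (v x)\<^sup>2)) (at x within {l..r})"
    if x: "x \<in> {l..r}" for x
    using has_field_derivative_subset[OF hode JI] x JI by blast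
  define \<omega> where "\<omega> = sqrt (- (c0\<^sup>2 + 4 * a * c1)) / 2"
  have w: "\<omega> > 0" using hdisc by (simp add: \<omega>_def)
  have w2: "\<omega>^2 = - (c0\<^sup>2 + 4 * a * c1) / 4"
    using hdisc by (simp add: \<omega>_def power_divide)
  have ww: "c1 * a + c0^2/4 = -(\<omega>^2)" unfolding w2 by (simp add: field_simps)
  have S0: "S 0 = 0" by (simp add: S_def)
  define K where "K = (c1 * v0 + c0/2) / \<omega>"
  define P where "P = cos (\<omega> * t) + K * sin (\<omega> * t)"
  have eP: "exp (c1 * S t + c0 * t / 2) = P"
    using riccati_sol[OF w ww J0 Jt dv dS S0] by (simp add: P_def K_def hinit)
  then have lnP: "ln P = c1 * S t + c0 * t / 2" by (metis ln_exp)
  have St: "S t = signed_integral0 v t"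
  proof (cases "t > 0")
    case True
    then show ?thesis by (simp add: S_def l_def signed_integral0_def)
  next
    case False
    then have "t < 0" using t0 by simp
    then show ?thesis by (simp add: S_def l_def signed_integral0_def)
  qed
  define B where "B = (c1 * v0 + c0) * v0 + \<bar>a\<bar>"
  have "(c1 * v0 + c0) * v0 \<ge> 0" using hc0 hc1 hv0 by simp
  then have B: "B > 0" using ha by (simp add: B_def)
  define L where "L = sqrt (c1 * B)"
  have L: "L > 0" using B hc1 by (simp add: L_def)
  have L2: "L^2 = c1 * B" using B hc1 by (simp add: L_def)
  have sn: "sin \<theta>1 = \<omega> / L" using hsin by (simp add: \<omega>_def L_def B_def)
  have cs: "cos \<theta>1 = (2 * c1 * v0 + c0) / (2 * L)" using hcos by (simp add: L_def B_def)
  have sq: "sqrt (1 - (cos \<theta>1)\<^sup>2) = \<omega> / L"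
  proof -
    have "sin \<theta>1 \<ge> 0" using h\<theta> by (intro sin_ge_zero) auto
    then have "sqrt ((sin \<theta>1)^2) = sin \<theta>1" by simp
    moreover have "1 - (cos \<theta>1)^2 = (sin \<theta>1)^2" by (simp add: sin_squared_eq)
    ultimately show ?thesis using sn by simp
  qed
  have c1ne: "cos \<theta>1 \<noteq> 1"
  proof
    assume "cos \<theta>1 = 1"
    then have "sin \<theta>1 = 0" using sin_cos_squared_add[of \<theta>1] by simp
    then show False using sn w L by simp
  qed
  have arg: "t * L * (\<omega> / L) = \<omega> * t" using L by simp
  have KK: "cos \<theta>1 / (\<omega> / L) = K" using L w
    unfolding cs K_def by (simp add: field_simps)
  have Qv: "Qfun (t * L) (cos \<theta>1) = ln P / (t * L)^2 - cos \<theta>1 / (t * L)"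
    unfolding Qfun_def sinc_term_def sq arg using c1ne KK by (simp add: P_def add.commute)
  have "B * t\<^sup>2 * Qfun (t * L) (cos \<theta>1) + v0 * t
        = B * ln P / L^2 - t * (B * cos \<theta>1 / L) + v0 * t"
    unfolding Qv using t0 L by (simp add: field_simps power2_eq_square)
  also have "B * ln P / L^2 = ln P / c1" unfolding L2 using B hc1 by simp
  also have "B * cos \<theta>1 / L = (2 * c1 * v0 + c0) / (2 * c1)"
  proof -
    have "B * cos \<theta>1 / L = B * (2 * c1 * v0 + c0) / (2 * L^2)"
      unfolding cs using L by (simp add: field_simps power2_eq_square)
    also have "\<dots> = (2 * c1 * v0 + c0) / (2 * c1)" unfolding L2 using B hc1 by (simp add: field_simps)
    finally show ?thesis .
  qed
  also have "ln P / c1 - t * ((2 * c1 * v0 + c0) / (2 * c1)) + v0 * t = S t"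
    unfolding lnP using hc1 by (simp add: field_simps)
  finally show ?thesis unfolding St B_def L_def by simp
qed


theorem mainTheorem10:
  fixes c0 c1 a v0 \<theta>1 :: real and v :: "real \<Rightarrow> real" and I :: "real set"
  assumes hc0: "c0 \<ge> 0" and hc1: "c1 > 0" and ha: "a < 0" and hv0: "v0 \<ge> 0"
    and hdisc: "c0\<^sup>2 + 4 * a * c1 < 0"
    and hI: "is_interval I" and h0I: "0 \<in> I"
    and hode: "\<And>t. t \<in> I \<Longrightarrow>
                 (v has_real_derivative (a - c0 * v t - c1 * (v t)\<^sup>2)) (at t within I)"
    and hinit: "v 0 = v0"
    and h\<theta>: "0 < \<theta>1" "\<theta>1 \<le> pi / 2"
    and hcos: "cos \<theta>1 = (2 * c1 * v0 + c0) /
                 (2 * sqrt (c1 * ((c1 * v0 + c0) * v0 + \<bar>a\<bar>)))"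
    and hsin: "sin \<theta>1 = sqrt (- (c0\<^sup>2 + 4 * a * c1)) /
                 (2 * sqrt (c1 * ((c1 * v0 + c0) * v0 + \<bar>a\<bar>)))"
  shows "(\<forall>t \<in> I. t \<noteq> 0 \<longrightarrow>
            signed_integral0 v t =
              ((c1 * v0 + c0) * v0 + \<bar>a\<bar>) * t\<^sup>2 *
                Qfun (t * sqrt (c1 * ((c1 * v0 + c0) * v0 + \<bar>a\<bar>))) (cos \<theta>1)
              + v0 * t)
       \<and> (\<forall>\<tau> c :: real. 0 \<le> c \<longrightarrow> c \<le> 1 \<longrightarrow> 0 < \<bar>\<tau>\<bar> \<longrightarrow> \<bar>\<tau>\<bar> \<le> 0.001 \<longrightarrow>
            (\<exists>\<epsilon>. Qfun \<tau> c =
                 - 1/2 + c * \<tau> / 3 - (2 * c\<^sup>2 + 1) / 12 * \<tau>\<^sup>2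
                 + (c\<^sup>2 + 2) / 15 * c * \<tau> ^ 3
                 - (2 * c ^ 4 + 11 * c\<^sup>2 + 2) / 90 * \<tau> ^ 4
                 + (2 * c ^ 4 + 26 * c\<^sup>2 + 17) / 315 * c * \<tau> ^ 5 - \<epsilon>
               \<and> \<bar>\<epsilon>\<bar> \<le> 10 powi (-18)))"
proof (intro conjI allI impI ballI)
  fix t assume "t \<in> I" "t \<noteq> 0"
  then show "signed_integral0 v t =
              ((c1 * v0 + c0) * v0 + \<bar>a\<bar>) * t\<^sup>2 *
                Qfun (t * sqrt (c1 * ((c1 * v0 + c0) * v0 + \<bar>a\<bar>))) (cos \<theta>1)
              + v0 * t"
    using part1[OF hc0 hc1 ha hv0 hdisc hI h0I hode hinit h\<theta> hcos hsin] by blast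
next
  fix \<tau> c :: real
  assume "0 \<le> c" "c \<le> 1" "0 < \<bar>\<tau>\<bar>" "\<bar>\<tau>\<bar> \<le> 0.001"
  then show "\<exists>\<epsilon>. Qfun \<tau> c =
                 - 1/2 + c * \<tau> / 3 - (2 * c\<^sup>2 + 1) / 12 * \<tau>\<^sup>2
                 + (c\<^sup>2 + 2) / 15 * c * \<tau> ^ 3
                 - (2 * c ^ 4 + 11 * c\<^sup>2 + 2) / 90 * \<tau> ^ 4
                 + (2 * c ^ 4 + 26 * c\<^sup>2 + 17) / 315 * c * \<tau> ^ 5 - \<epsilon>
               \<and> \<bar>\<epsilon>\<bar> \<le> 10 powi (-18)"
    by (rule part2)
qed

end
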